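(* In a finite ELP, let $\pi$ be a policy, let $Q_{\max}$ be an optimal solution of the problem: maximize $\mathbb E_\pi[Q(S_T,A_T)]$ over $Q\in\mathcal Q$ subject to $Q\le\mathcal BQ$ pointwise, and let $\mu$ be a $Q_{\max}$-greedy policy. Let $(s,a)\in\mathcal S\times\mathcal A$ and define $N(s,a)=\{(s',a'):s'\notin\mathcal S_\bot,\ P(s'|s,a)\mu(a'|s')>0\}$. If $Q_{\max}(s,a)=Q^*(s,a)$, then for every $(s',a')\in N(s,a)$: $Q_{\max}(s',a')=Q^*(s',a')$ and $\max_{\bar a}Q_{\max}(s',\bar a)=\max_{\bar a}Q^*(s',\bar a)$.
   Context: A finite ELP is $(\mathcal S,\mathcal A,P,R,\rho)$ with finite $\mathcal S,\mathcal A$, reward $R:\mathcal S\to\mathbb R$, transitions $P(s'|s,a)$, distribution $\rho$, and nonempty terminal set $\mathcal S_\bot$. Under a policy $\pi$, $S_0$ is a fixed terminal state, $A_t\sim\pi(\cdot|S_t)$, $S_{t+1}\sim P(\cdot|S_t,A_t)$, and $T=\inf\{t\ge1:S_t\in\mathcal S_\bot\}$. ELP conditions: $\mathbb E_\pi[T]<\infty$ for every $\pi$; $P(s'|s,a)=\rho(s')$ for all $s\in\mathcal S_\bot$, all $a,s'$; every state is reachable under some policy. $\mathcal Q$ = all functions $\mathcal S\times\mathcal A\to\mathbb R$. $\mathcal BQ(s,a)=\sum_{s'}P(s'|s,a)\big(R(s')+\mathbf 1[s'\notin\mathcal S_\bot]\max_{a'}Q(s',a')\big)$, with unique fixed point $Q^*$.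 A $Q$-greedy policy is one with $\mu(a|s)>0$ only if $Q(s,a)=\max_{\bar a}Q(s,\bar a)$. *)

theory Defs
  imports Complex_Main
begin

text \<open>Finite ELP. States 's and actions 'a are finite types.
  P s a s' is the transition probability P(s'|s,a); pol s a is pi(a|s).\<close>

definition is_policy :: "('s::finite \<Rightarrow> 'a::finite \<Rightarrow> real) \<Rightarrow> bool" where
  "is_policy pol \<longleftrightarrow> (\<forall>s a. 0 \<le> pol s a) \<and> (\<forall>s. (\<Sum>a\<in>UNIV. pol s a) = 1)"

text \<open>Distribution of S_t under the policy, started at the terminal state s0.\<close>
fun state_dist :: "('s::finite \<Rightarrow> 'a::finite \<Rightarrow> 's \<Rightarrow> real) \<Rightarrow> 's \<Rightarrow>
    ('s \<Rightarrow> 'a \<Rightarrow> real) \<Rightarrow> nat \<Rightarrow> 's \<Rightarrow> real" where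
  "state_dist P s0 pol 0 s = (if s = s0 then 1 else 0)"
| "state_dist P s0 pol (Suc t) s' =
     (\<Sum>s\<in>UNIV. state_dist P s0 pol t s * (\<Sum>a\<in>UNIV. pol s a * P s a s'))"

text \<open>alive P Sbot s0 pol t s = Pr(S_t = s and t < T) (T = first hitting time t \<ge> 1 of Sbot).\<close>
fun alive :: "('s::finite \<Rightarrow> 'a::finite \<Rightarrow> 's \<Rightarrow> real) \<Rightarrow> 's set \<Rightarrow> 's \<Rightarrow>
    ('s \<Rightarrow> 'a \<Rightarrow> real) \<Rightarrow> nat \<Rightarrow> 's \<Rightarrow> real" where
  "alive P Sbot s0 pol 0 s = (if s = s0 then 1 else 0)"
| "alive P Sbot s0 pol (Suc t) s' =
     (if s' \<in> Sbot then 0 else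
       (\<Sum>s\<in>UNIV. alive P Sbot s0 pol t s * (\<Sum>a\<in>UNIV. pol s a * P s a s')))"

text \<open>E_pi[T] = sum over t \<ge> 0 of Pr(T > t); finiteness means this series converges.\<close>
definition finite_expected_T where
  "finite_expected_T P Sbot s0 pol \<longleftrightarrow> summable (\<lambda>t. \<Sum>s\<in>UNIV. alive P Sbot s0 pol t s)"

text \<open>Pr(S_T = s) for a terminal state s.\<close>
definition hit_dist where
  "hit_dist P Sbot s0 pol s =
     (\<Sum>t. \<Sum>s''\<in>UNIV. alive P Sbot s0 pol t s'' * (\<Sum>a\<in>UNIV. pol s'' a * P s'' a s))"

text \<open>E_pi[Q(S_T, A_T)], with A_T \<sim> pi(.|S_T).\<close>
definition exp_terminal_Q where
  "exp_terminal_Q P Sbot s0 pol Q =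
     (\<Sum>s\<in>Sbot. hit_dist P Sbot s0 pol s * (\<Sum>a\<in>UNIV. pol s a * Q s a))"

definition finite_ELP ::
  "('s::finite \<Rightarrow> 'a::finite \<Rightarrow> 's \<Rightarrow> real) \<Rightarrow> ('s \<Rightarrow> real) \<Rightarrow> 's set \<Rightarrow> 's \<Rightarrow> bool" where
  "finite_ELP P \<rho> Sbot s0 \<longleftrightarrow>
     Sbot \<noteq> {} \<and> s0 \<in> Sbot \<and>
     (\<forall>s a s'. 0 \<le> P s a s') \<and> (\<forall>s a. (\<Sum>s'\<in>UNIV. P s a s') = 1) \<and>
     (\<forall>s'. 0 \<le> \<rho> s') \<and> (\<Sum>s'\<in>UNIV. \<rho> s') = 1 \<and>
     (\<forall>pol. is_policy pol \<longrightarrow> finite_expected_T P Sbot s0 pol) \<and>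
     (\<forall>s\<in>Sbot. \<forall>a s'. P s a s' = \<rho> s') \<and>
     (\<forall>s. \<exists>pol. is_policy pol \<and> (\<exists>t. state_dist P s0 pol t s > 0))"

definition bellman ::
  "('s::finite \<Rightarrow> 'a::finite \<Rightarrow> 's \<Rightarrow> real) \<Rightarrow> ('s \<Rightarrow> real) \<Rightarrow> 's set \<Rightarrow>
     ('s \<Rightarrow> 'a \<Rightarrow> real) \<Rightarrow> 's \<Rightarrow> 'a \<Rightarrow> real" where
  "bellman P R Sbot Q s a =
     (\<Sum>s'\<in>UNIV. P s a s' * (R s' + (if s' \<notin> Sbot then Max (range (Q s')) else 0)))"

definition Qstar where
  "Qstar P R Sbot = (THE Q. bellman P R Sbot Q = Q)"

definition greedy :: "('s \<Rightarrow> 'a::finite \<Rightarrow> real) \<Rightarrow> ('s \<Rightarrow> 'a \<Rightarrow> real) \<Rightarrow> bool" where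
  "greedy Q mu \<longleftrightarrow> (\<forall>s a. mu s a > 0 \<longrightarrow> Q s a = Max (range (Q s)))"

end

theory Submission
  imports Defs
begin


lemma sum_pos_ex: "0 < sum f A \<Longrightarrow> \<exists>a\<in>A. 0 < (f a::real)"
  by (metis not_le sum_nonpos)

lemma alive_nn:
  assumes "\<And>s a s'. 0 \<le> P s a s'" "\<And>s a. 0 \<le> pol s a"
  shows "0 \<le> alive P Sbot s0 pol t s"
  using assms by (induction t arbitrary: s) (auto intro!: sum_nonneg mult_nonneg_nonneg)

lemma sd_nn:
  assumes "\<And>s a s'. 0 \<le> P s a s'" "\<And>s a. 0 \<le> pol s a"
  shows "0 \<le> state_dist P s0 pol t s"
  using assms by (induction t arbitrary: s) (auto intro!: sum_nonneg mult_nonneg_nonneg)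

lemma no_trap:
  fixes P :: "'s::finite \<Rightarrow> 'a::finite \<Rightarrow> 's \<Rightarrow> real"
  assumes elp: "finite_ELP P \<rho> Sbot s0" and E: "E \<noteq> {}"
    and htrap: "\<forall>(s,a)\<in>E. \<forall>s'. P s a s' > 0 \<longrightarrow> s' \<notin> Sbot \<and> (\<exists>a'. (s',a') \<in> E)"
  shows False
proof -
  have Pnn: "\<And>s a s'. 0 \<le> P s a s'" and Psum: "\<And>s a. (\<Sum>s'\<in>UNIV. P s a s') = 1"
    and s0: "s0 \<in> Sbot" and fin: "\<And>pol. is_policy pol \<Longrightarrow> finite_expected_T P Sbot s0 pol"
    and termP: "\<And>s a s'. s \<in> Sbot \<Longrightarrow> P s a s' = \<rho> s'"
    and reach: "\<And>s. \<exists>pol. is_policy pol \<and> (\<exists>t. state_dist P s0 pol t s > 0)"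
    using elp unfolding finite_ELP_def by auto
  define K where "K = {s. \<exists>a. (s,a) \<in> E} - Sbot"
  define \<sigma> where "\<sigma> s = (SOME a. (s,a) \<in> E)" for s
  have Kclosed: "s' \<in> K" if "k \<in> K" "P k (\<sigma> k) s' > 0" for k s'
  proof -
    have "(k, \<sigma> k) \<in> E" using that(1) unfolding K_def \<sigma>_def by (auto intro: someI)
    thus ?thesis using htrap that(2) unfolding K_def by auto
  qed
  have KsumP: "(\<Sum>s'\<in>K. P k (\<sigma> k) s') = 1" if "k \<in> K" for k
  proof -
    have "(\<Sum>s'\<in>UNIV. P k (\<sigma> k) s') = (\<Sum>s'\<in>K. P k (\<sigma> k) s') + (\<Sum>s'\<in>UNIV - K. P k (\<sigma> k) s')"
      by (metis add.commute finite sum.subset_diff top_greatest)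
    moreover have "(\<Sum>s'\<in>UNIV - K. P k (\<sigma> k) s') = 0"
      using Kclosed[OF that] Pnn by (intro sum.neutral) (metis DiffE order_le_less)
    ultimately show ?thesis using Psum by simp
  qed
  obtain e1 e2 where e: "(e1,e2) \<in> E" using E by auto
  from Psum[of e1 e2] have "0 < (\<Sum>s'\<in>UNIV. P e1 e2 s')" by simp
  then obtain k where "P e1 e2 k > 0" using sum_pos_ex by blast
  with htrap e have kK: "k \<in> K" unfolding K_def by blast
  obtain pol1 t where pol1: "is_policy pol1" and sdk: "state_dist P s0 pol1 t k > 0"
    using reach by blast
  have p1nn: "\<And>s a. 0 \<le> pol1 s a" using pol1 unfolding is_policy_def by auto
  define pol2 where "pol2 s a = (if s \<in> K then (if a = \<sigma> s then 1 else 0) else pol1 s a)" for s a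
  have pol2: "is_policy pol2"
    unfolding is_policy_def
  proof (intro conjI allI)
    fix s a show "0 \<le> pol2 s a" using pol1 unfolding pol2_def is_policy_def by auto
  next
    fix s show "(\<Sum>a\<in>UNIV. pol2 s a) = 1"
    proof (cases "s \<in> K")
      case True then show ?thesis unfolding pol2_def by simp
    next
      case False then show ?thesis using pol1 unfolding pol2_def is_policy_def by simp
    qed
  qed
  have p2nn: "\<And>s a. 0 \<le> pol2 s a" using pol2 unfolding is_policy_def by auto
  let ?al = "alive P Sbot s0 pol2"
  have alnn: "\<And>t s. 0 \<le> ?al t s" by (rule alive_nn[OF Pnn p2nn])
  have sdnn: "\<And>t s. 0 \<le> state_dist P s0 pol1 t s" by (rule sd_nn[OF Pnn p1nn])
  have in1: "\<And>s s'. 0 \<le> (\<Sum>a\<in>UNIV. pol1 s a * P s a s')"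
    using p1nn Pnn by (intro sum_nonneg mult_nonneg_nonneg) auto
  have in2: "\<And>s s'. 0 \<le> (\<Sum>a\<in>UNIV. pol2 s a * P s a s')"
    using p2nn Pnn by (intro sum_nonneg mult_nonneg_nonneg) auto
  define Good where "Good = (\<exists>t0 k'. k' \<in> K \<and> ?al t0 k' > 0)"
  have claim: "Good \<or> s \<in> Sbot \<or> (\<exists>t. ?al t s > 0)" if "state_dist P s0 pol1 t s > 0" for t s
    using that
  proof (induction t arbitrary: s)
    case 0
    then show ?case using s0 by (auto split: if_splits)
  next
    case (Suc t s')
    from Suc.prems obtain s where "0 < state_dist P s0 pol1 t s * (\<Sum>a\<in>UNIV. pol1 s a * P s a s')"
      using sum_pos_ex by force
    then have sd: "state_dist P s0 pol1 t s > 0" and "0 < (\<Sum>a\<in>UNIV. pol1 s a * P s a s')"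
      using sdnn[of t s] in1[of s s'] by (auto simp: zero_less_mult_iff)
    then obtain a where pa: "0 < pol1 s a * P s a s'" using sum_pos_ex by blast
    then have pa1: "0 < pol1 s a" "0 < P s a s'" using p1nn[of s a] Pnn[of s a s'] by (auto simp: zero_less_mult_iff)
    from Suc.IH[OF sd] have IH: "Good \<or> s \<in> Sbot \<or> (\<exists>t. ?al t s > 0)" .
    show ?case
    proof (cases "Good \<or> s' \<in> Sbot")
      case True then show ?thesis by auto
    next
      case False
      then have nG: "\<not> Good" and s'n: "s' \<notin> Sbot" by auto
      show ?thesis
      proof (cases "s \<in> Sbot")
        case True
        have "?al (Suc 0) s' = (\<Sum>a\<in>UNIV. pol2 s0 a * P s0 a s')"
        proof -
          have "?al (Suc 0) s' = (\<Sum>x\<in>UNIV. (if x = s0 then 1 else 0) * (\<Sum>a\<in>UNIV. pol2 x a * P x a s'))"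
            using s'n by simp
          also have "\<dots> = (\<Sum>x\<in>UNIV. (if x = s0 then (\<Sum>a\<in>UNIV. pol2 x a * P x a s') else 0))"
            by (intro sum.cong) auto
          also have "\<dots> = (\<Sum>a\<in>UNIV. pol2 s0 a * P s0 a s')" by simp
          finally show ?thesis .
        qed
        also have "\<dots> = (\<Sum>a\<in>UNIV. pol2 s0 a) * \<rho> s'"
          using termP[OF s0] by (simp add: sum_distrib_right)
        also have "\<dots> = \<rho> s'" using pol2 unfolding is_policy_def by simp
        also have "\<rho> s' = P s a s'" using termP[OF True] by simp
        finally have "0 < ?al (Suc 0) s'" using pa1 by simp
        then show ?thesis by blast
      next
        case False
        with IH nG obtain t1 where al: "?al t1 s > 0" by auto
        have sK: "s \<notin> K" using al nG unfolding Good_def by auto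
        have pp: "pol1 s a * P s a s' = pol2 s a * P s a s'" using sK by (simp add: pol2_def)
        have "pol2 s a * P s a s' \<le> (\<Sum>a\<in>UNIV. pol2 s a * P s a s')"
          by (rule member_le_sum) (simp_all add: mult_nonneg_nonneg[OF p2nn Pnn])
        then have "?al t1 s * (pol1 s a * P s a s') \<le> ?al t1 s * (\<Sum>a\<in>UNIV. pol2 s a * P s a s')"
          unfolding pp by (rule mult_left_mono) (rule alnn)
        also have "\<dots> \<le> (\<Sum>x\<in>UNIV. ?al t1 x * (\<Sum>a\<in>UNIV. pol2 x a * P x a s'))"
          by (rule member_le_sum[where f="\<lambda>x. ?al t1 x * (\<Sum>a\<in>UNIV. pol2 x a * P x a s')"])
             (simp_all add: mult_nonneg_nonneg[OF alnn in2])
        also have "\<dots> = ?al (Suc t1) s'" using s'n by simp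
        finally have "0 < ?al (Suc t1) s'" using al pa by (meson mult_pos_pos order_less_le_trans)
        then show ?thesis by blast
      qed
    qed
  qed
  have G: Good using claim[OF sdk] kK unfolding K_def Good_def by blast
  then obtain t0 k' where k': "k' \<in> K" "?al t0 k' > 0" unfolding Good_def by blast
  define m where "m t = (\<Sum>s\<in>K. ?al t s)" for t
  have mstep: "m t \<le> m (Suc t)" for t
  proof -
    have "m t = (\<Sum>s\<in>K. ?al t s * (\<Sum>s'\<in>K. P s (\<sigma> s) s'))"
      unfolding m_def using KsumP by simp
    also have "\<dots> = (\<Sum>s'\<in>K. \<Sum>s\<in>K. ?al t s * P s (\<sigma> s) s')"
      unfolding sum_distrib_left by (rule sum.swap)
    also have "\<dots> \<le> (\<Sum>s'\<in>K. ?al (Suc t) s')"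
    proof (rule sum_mono)
      fix s' assume s'K: "s' \<in> K"
      then have s'n: "s' \<notin> Sbot" unfolding K_def by auto
      have "(\<Sum>s\<in>K. ?al t s * P s (\<sigma> s) s') = (\<Sum>s\<in>K. ?al t s * (\<Sum>a\<in>UNIV. pol2 s a * P s a s'))"
      proof (intro sum.cong refl)
        fix x assume xK: "x \<in> K"
        have "(\<Sum>a\<in>UNIV. pol2 x a * P x a s') = (\<Sum>a\<in>UNIV. if a = \<sigma> x then P x a s' else 0)"
          by (intro sum.cong refl) (simp add: pol2_def xK)
        also have "\<dots> = P x (\<sigma> x) s'" by simp
        finally show "?al t x * P x (\<sigma> x) s' = ?al t x * (\<Sum>a\<in>UNIV. pol2 x a * P x a s')" by simp
      qed
      also have "\<dots> \<le> (\<Sum>s\<in>UNIV. ?al t s * (\<Sum>a\<in>UNIV. pol2 s a * P s a s'))"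
        by (intro sum_mono2) (simp_all add: mult_nonneg_nonneg[OF alnn in2])
      also have "\<dots> = ?al (Suc t) s'" using s'n by simp
      finally show "(\<Sum>s\<in>K. ?al t s * P s (\<sigma> s) s') \<le> ?al (Suc t) s'" .
    qed
    finally show ?thesis unfolding m_def .
  qed
  have mpos: "m t0 > 0" unfolding m_def
    using k' alnn member_le_sum[of k' K "?al t0"] by (simp add: order_less_le_trans)
  have mge: "m t0 \<le> m (t0 + d)" for d
  proof (induction d)
    case 0 then show ?case by simp
  next
    case (Suc d) then show ?case using mstep[of "t0+d"] by simp
  qed
  define f where "f t = (\<Sum>s\<in>UNIV. ?al t s)" for t
  have fge: "m t \<le> f t" for t unfolding m_def f_def by (intro sum_mono2) (simp_all add: alnn)
  have "summable f" using fin[OF pol2] unfolding finite_expected_T_def f_def by simp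
  then have "f \<longlonglongrightarrow> 0" by (rule summable_LIMSEQ_zero)
  then have "eventually (\<lambda>t. f t < m t0) sequentially" using mpos by (rule order_tendstoD)
  then obtain N where "\<forall>t\<ge>N. f t < m t0" unfolding eventually_sequentially by blast
  then have "f (t0 + N) < m t0" by simp
  moreover have "m t0 \<le> f (t0 + N)" using mge[of N] fge[of "t0+N"] by simp
  ultimately show False by simp
qed



lemma Max_ge': "f x \<le> Max (range (f::'b::finite \<Rightarrow> real))"
  by (simp add: Max_ge)
lemma Max_ex: "\<exists>x. Max (range (f::'b::finite \<Rightarrow> real)) = f x"
proof -
  have "Max (range f) \<in> range f" by (rule Max_in) auto
  then obtain x where "Max (range f) = f x" by blast
  then show ?thesis by blast
qed
lemma Max_mono': "(\<And>x. f x \<le> g x) \<Longrightarrow> Max (range (f::'b::finite \<Rightarrow> real)) \<le> Max (range g)"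
  by (metis Max_ex Max_ge' order_trans)
lemma Max_diff: "Max (range (f::'b::finite \<Rightarrow> real)) - Max (range g) \<le> Max (range (\<lambda>x. f x - g x))"
proof -
  obtain x where x: "Max (range f) = f x" using Max_ex by blast
  have "f x - Max (range g) \<le> f x - g x" using Max_ge'[of g x] by simp
  also have "\<dots> \<le> Max (range (\<lambda>x. f x - g x))" by (rule Max_ge'[where f="\<lambda>x. f x - g x"])
  finally show ?thesis using x by simp
qed
lemma Max_le_bound: "(\<And>x. f x \<le> c) \<Longrightarrow> Max (range (f::'b::finite \<Rightarrow> real)) \<le> c"
  by (metis Max_ex)
lemma Max_ge_bound: "(\<And>x. c \<le> f x) \<Longrightarrow> c \<le> Max (range (f::'b::finite \<Rightarrow> real))"
  by (meson Max_ge' order_trans)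
lemma Max_cmult: "0 \<le> c \<Longrightarrow> Max (range (\<lambda>x. c * (f::'b::finite \<Rightarrow> real) x)) = c * Max (range f)"
proof (rule antisym)
  assume c: "0 \<le> c"
  show "Max (range (\<lambda>x. c * f x)) \<le> c * Max (range f)"
    using Max_ex[of "\<lambda>x. c * f x"] Max_ge'[of f] c by (metis mult_left_mono)
  obtain x where x: "Max (range f) = f x" using Max_ex by blast
  show "c * Max (range f) \<le> Max (range (\<lambda>x. c * f x))"
    unfolding x by (rule Max_ge'[where f="\<lambda>x. c * f x"])
qed
lemma Max_const: "Max (range (\<lambda>x::'b::finite. c::real)) = c"
  by (metis Max_ex)

definition Mx :: "('s::finite \<Rightarrow> 'a::finite \<Rightarrow> real) \<Rightarrow> real" where
  "Mx h = Max (range (\<lambda>p. h (fst p) (snd p)))"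
lemma Mx_ge: "h s a \<le> Mx h"
  unfolding Mx_def using Max_ge'[of "\<lambda>p. h (fst p) (snd p)" "(s,a)"] by simp
lemma Mx_ex: "\<exists>s a. Mx h = h s a"
  unfolding Mx_def using Max_ex[of "\<lambda>p. h (fst p) (snd p)"] by auto

locale ctx =
  fixes P :: "'s::finite \<Rightarrow> 'a::finite \<Rightarrow> 's \<Rightarrow> real" and R :: "'s \<Rightarrow> real" and Sbot :: "'s set"
  assumes Pnn: "\<And>s a s'. 0 \<le> P s a s'"
    and Psum: "\<And>s a. (\<Sum>s'\<in>UNIV. P s a s') = 1"
    and notrap: "\<And>E. E \<noteq> {} \<Longrightarrow>
        \<not> (\<forall>(s,a)\<in>E. \<forall>s'. P s a s' > 0 \<longrightarrow> s' \<notin> Sbot \<and> (\<exists>a'. (s',a') \<in> E))"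
begin

abbreviation B where "B \<equiv> bellman P R Sbot"

definition G :: "('s \<Rightarrow> 'a \<Rightarrow> real) \<Rightarrow> 's \<Rightarrow> 'a \<Rightarrow> real" where
  "G h s a = (\<Sum>s'\<in>UNIV. P s a s' * (if s' \<notin> Sbot then Max (range (h s')) else 0))"

lemma G_mono: "(\<And>s a. h1 s a \<le> h2 s a) \<Longrightarrow> G h1 s a \<le> G h2 s a"
  unfolding G_def by (intro sum_mono mult_left_mono) (auto simp: Pnn intro!: Max_mono' intro: order_trans[OF _ Max_ge'])

lemma G_cmult: "0 \<le> c \<Longrightarrow> G (\<lambda>s a. c * h s a) s a = c * G h s a"
  unfolding G_def by (simp add: Max_cmult sum_distrib_left algebra_simps if_distrib cong: if_cong)

lemma G_nn: "(\<And>s a. 0 \<le> h s a) \<Longrightarrow> 0 \<le> G h s a"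
  unfolding G_def using Pnn by (intro sum_nonneg mult_nonneg_nonneg) (auto intro!: Max_ge_bound)

lemma G_le1: assumes "\<And>s a. h s a \<le> 1" shows "G h s a \<le> 1"
proof -
  have "G h s a \<le> (\<Sum>s'\<in>UNIV. P s a s' * 1)"
    unfolding G_def using assms Pnn
    by (intro sum_mono mult_left_mono) (auto intro!: Max_le_bound)
  then show ?thesis using Psum by simp
qed

lemma B_diff_eq: "B Q1 s a - B Q2 s a = (\<Sum>s'\<in>UNIV. P s a s' * (if s' \<notin> Sbot then Max (range (Q1 s')) - Max (range (Q2 s')) else 0))"
  unfolding bellman_def sum_subtractf[symmetric] by (intro sum.cong refl) (simp add: algebra_simps)

lemma B_diff: "B Q1 s a - B Q2 s a \<le> G (\<lambda>s a. max (Q1 s a - Q2 s a) 0) s a"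
  unfolding B_diff_eq G_def
proof (intro sum_mono mult_left_mono)
  fix s' show "0 \<le> P s a s'" by (rule Pnn)
  have "Max (range (Q1 s')) - Max (range (Q2 s')) \<le> Max (range (\<lambda>x. Q1 s' x - Q2 s' x))" by (rule Max_diff)
  also have "\<dots> \<le> Max (range (\<lambda>x. max (Q1 s' x - Q2 s' x) 0))" by (rule Max_mono') simp
  finally show "(if s' \<notin> Sbot then Max (range (Q1 s')) - Max (range (Q2 s')) else 0)
         \<le> (if s' \<notin> Sbot then Max (range (\<lambda>x. max (Q1 s' x - Q2 s' x) 0)) else 0)" by simp
qed

lemma Max_absdiff: "\<bar>Max (range (f::'b::finite \<Rightarrow> real)) - Max (range g)\<bar> \<le> Max (range (\<lambda>x. \<bar>f x - g x\<bar>))"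
proof -
  have 1: "Max (range f) - Max (range g) \<le> Max (range (\<lambda>x. \<bar>f x - g x\<bar>))"
  proof -
    have "Max (range (\<lambda>x. f x - g x)) \<le> Max (range (\<lambda>x. \<bar>f x - g x\<bar>))" by (rule Max_mono') simp
    then show ?thesis using Max_diff[of f g] by linarith
  qed
  have 2: "Max (range g) - Max (range f) \<le> Max (range (\<lambda>x. \<bar>f x - g x\<bar>))"
  proof -
    have "Max (range (\<lambda>x. g x - f x)) \<le> Max (range (\<lambda>x. \<bar>f x - g x\<bar>))" by (rule Max_mono') auto
    then show ?thesis using Max_diff[of g f] by linarith
  qed
  show ?thesis using 1 2 by simp
qed

lemma B_abs: "\<bar>B Q1 s a - B Q2 s a\<bar> \<le> G (\<lambda>s a. \<bar>Q1 s a - Q2 s a\<bar>) s a"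
  unfolding B_diff_eq
proof -
  let ?t = "\<lambda>s'. P s a s' * (if s' \<notin> Sbot then Max (range (Q1 s')) - Max (range (Q2 s')) else 0)"
  have "\<bar>sum ?t UNIV\<bar> \<le> (\<Sum>s'\<in>UNIV. \<bar>?t s'\<bar>)" by (rule sum_abs)
  also have "\<dots> \<le> G (\<lambda>s a. \<bar>Q1 s a - Q2 s a\<bar>) s a"
    unfolding G_def
  proof (intro sum_mono)
    fix s'
    have "\<bar>?t s'\<bar> = P s a s' * \<bar>if s' \<notin> Sbot then Max (range (Q1 s')) - Max (range (Q2 s')) else 0\<bar>"
      by (simp only: abs_mult abs_of_nonneg[OF Pnn])
    also have "\<dots> \<le> P s a s' * (if s' \<notin> Sbot then Max (range (\<lambda>x. \<bar>Q1 s' x - Q2 s' x\<bar>)) else 0)"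
      using Max_absdiff[of "Q1 s'" "Q2 s'"] by (intro mult_left_mono) (auto simp: Pnn)
    finally show "\<bar>?t s'\<bar> \<le> P s a s' * (if s' \<notin> Sbot then Max (range (\<lambda>x. \<bar>Q1 s' x - Q2 s' x\<bar>)) else 0)" .
  qed
  finally show "\<bar>sum ?t UNIV\<bar> \<le> G (\<lambda>s a. \<bar>Q1 s a - Q2 s a\<bar>) s a" .
qed

lemma Gn_mono: "(\<And>s a. h1 s a \<le> h2 s a) \<Longrightarrow> (G^^n) h1 s a \<le> (G^^n) h2 s a"
  by (induction n arbitrary: s a) (auto intro: G_mono)

lemma Gn_cmult: "0 \<le> c \<Longrightarrow> (G^^n) (\<lambda>s a. c * h s a) = (\<lambda>s a. c * (G^^n) h s a)"
proof (induction n)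
  case 0 then show ?case by simp
next
  case (Suc n)
  have "(G^^Suc n) (\<lambda>s a. c * h s a) = G ((G^^n) (\<lambda>s a. c * h s a))" by simp
  also have "\<dots> = G (\<lambda>s a. c * (G^^n) h s a)" using Suc by simp
  also have "\<dots> = (\<lambda>s a. c * G ((G^^n) h) s a)" by (rule ext, rule ext, rule G_cmult[OF Suc.prems])
  finally show ?case by simp
qed

definition u where "u n = (G^^n) (\<lambda>s a. 1)"

lemma u_bounds: "0 \<le> u n s a \<and> u n s a \<le> 1"
  unfolding u_def by (induction n arbitrary: s a) (auto intro!: G_nn G_le1)

lemma u_dec: "u (Suc n) s a \<le> u n s a"
proof (induction n arbitrary: s a)
  case 0 then show ?case using u_bounds[of "Suc 0"] by (simp add: u_def)
next
  case (Suc n)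
  have "u (Suc (Suc n)) s a = G (u (Suc n)) s a" by (simp add: u_def)
  also have "\<dots> \<le> G (u n) s a" by (rule G_mono) (rule Suc.IH)
  also have "\<dots> = u (Suc n) s a" by (simp add: u_def)
  finally show ?case .
qed

lemma G_eq1:
  assumes h: "\<And>s a. h s a \<le> 1" and g: "G h s a = 1" and p: "P s a s' > 0"
  shows "s' \<notin> Sbot \<and> Max (range (h s')) = 1"
proof -
  define c where "c s' = (if s' \<notin> Sbot then Max (range (h s')) else 0)" for s'
  have c1: "c x \<le> 1" for x unfolding c_def using h by (auto intro!: Max_le_bound)
  have "(\<Sum>x\<in>UNIV. P s a x * (1 - c x)) = (\<Sum>x\<in>UNIV. P s a x) - G h s a"
    unfolding G_def c_def sum_subtractf[symmetric] by (simp add: algebra_simps)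
  also have "\<dots> = 0" using Psum g by simp
  finally have "(\<Sum>x\<in>UNIV. P s a x * (1 - c x)) = 0" .
  moreover have "\<forall>x\<in>UNIV. 0 \<le> P s a x * (1 - c x)" using c1 Pnn by (simp add: mult_nonneg_nonneg)
  ultimately have "P s a s' * (1 - c s') = 0" using sum_nonneg_eq_0_iff[of UNIV "\<lambda>x. P s a x * (1 - c x)"] by simp
  then have "c s' = 1" using p by simp
  then show ?thesis unfolding c_def by (auto split: if_splits)
qed

definition EE where "EE n = {(s,a). u n s a = 1}"

lemma EE_sub: "EE (Suc n) \<subseteq> EE n"
proof
  fix x assume "x \<in> EE (Suc n)"
  then obtain s a where x: "x = (s,a)" "u (Suc n) s a = 1" unfolding EE_def by auto
  have "u n s a = 1" using u_dec[of n s a] u_bounds[of n s a] x(2) by linarith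
  then show "x \<in> EE n" using x unfolding EE_def by simp
qed

lemma EE_strict: assumes ne: "EE (Suc n) \<noteq> {}" shows "EE (Suc n) \<noteq> EE n"
proof
  assume eq: "EE (Suc n) = EE n"
  have "\<forall>(s,a)\<in>EE (Suc n). \<forall>s'. P s a s' > 0 \<longrightarrow> s' \<notin> Sbot \<and> (\<exists>a'. (s',a') \<in> EE (Suc n))"
  proof (clarify)
    fix s a s' assume sa: "(s,a) \<in> EE (Suc n)" and p: "P s a s' > 0"
    have "G (u n) s a = 1" using sa by (simp add: EE_def u_def)
    from G_eq1[OF _ this p] u_bounds have r: "s' \<notin> Sbot" "Max (range (u n s')) = 1" by auto
    obtain a' where "Max (range (u n s')) = u n s' a'" using Max_ex by blast
    then have "(s',a') \<in> EE n" using r by (simp add: EE_def)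
    then show "s' \<notin> Sbot \<and> (\<exists>a'. (s',a') \<in> EE (Suc n))" using r eq by auto
  qed
  with notrap[OF ne] show False by blast
qed

lemma EE_card: "EE n \<noteq> {} \<Longrightarrow> n + card (EE n) \<le> card (UNIV :: ('s \<times> 'a) set)"
proof (induction n)
  case 0 then show ?case by (simp add: card_mono)
next
  case (Suc n)
  have "EE n \<noteq> {}" using Suc.prems EE_sub by blast
  moreover have "EE (Suc n) \<subset> EE n" using EE_sub EE_strict[OF Suc.prems] by blast
  then have "card (EE (Suc n)) < card (EE n)" by (simp add: psubset_card_mono)
  ultimately show ?case using Suc.IH by simp
qed



lemma u_lt1: "u (card (UNIV :: ('s \<times> 'a) set)) s a < 1"
proof -
  have "EE (card (UNIV :: ('s \<times> 'a) set)) = {}"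
  proof (rule ccontr)
    assume ne: "EE (card (UNIV :: ('s \<times> 'a) set)) \<noteq> {}"
    then have "card (EE (card (UNIV :: ('s \<times> 'a) set))) > 0" by (simp add: card_gt_0_iff)
    with EE_card[OF ne] show False by simp
  qed
  then have "u (card (UNIV :: ('s \<times> 'a) set)) s a \<noteq> 1" unfolding EE_def by auto
  then show ?thesis using u_bounds[of "card (UNIV :: ('s \<times> 'a) set)" s a] by simp
qed

definition beta where "beta = Mx (u (card (UNIV :: ('s \<times> 'a) set)))"

lemma beta: "0 \<le> beta" "beta < 1"
proof -
  show "0 \<le> beta" unfolding beta_def using u_bounds Mx_ge by (metis order_trans)
  obtain s a where "Mx (u (card (UNIV :: ('s \<times> 'a) set))) = u (card (UNIV :: ('s \<times> 'a) set)) s a" using Mx_ex by blast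
  then show "beta < 1" unfolding beta_def using u_lt1 by simp
qed

lemma Bn_abs: "\<bar>(B^^n) Q1 s a - (B^^n) Q2 s a\<bar> \<le> (G^^n) (\<lambda>s a. \<bar>Q1 s a - Q2 s a\<bar>) s a"
proof (induction n arbitrary: s a)
  case 0 then show ?case by simp
next
  case (Suc n)
  have "\<bar>(B^^Suc n) Q1 s a - (B^^Suc n) Q2 s a\<bar> \<le> G (\<lambda>s a. \<bar>(B^^n) Q1 s a - (B^^n) Q2 s a\<bar>) s a"
    unfolding funpow.simps comp_def by (rule B_abs)
  also have "\<dots> \<le> G ((G^^n) (\<lambda>s a. \<bar>Q1 s a - Q2 s a\<bar>)) s a" by (rule G_mono) (rule Suc.IH)
  finally show ?case by simp
qed

lemma Gn_const: "0 \<le> c \<Longrightarrow> (G^^n) (\<lambda>s a. c) s a = c * u n s a"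
  using Gn_cmult[of c n "\<lambda>s a. 1"] unfolding u_def by simp

lemma Bn_contr:
  assumes "\<And>s a. \<bar>Q1 s a - Q2 s a\<bar> \<le> c"
  shows "\<bar>(B^^(card (UNIV :: ('s \<times> 'a) set))) Q1 s a - (B^^(card (UNIV :: ('s \<times> 'a) set))) Q2 s a\<bar> \<le> c * beta"
proof -
  have c: "0 \<le> c" using assms[of undefined undefined] by linarith
  have "\<bar>(B^^(card (UNIV :: ('s \<times> 'a) set))) Q1 s a - (B^^(card (UNIV :: ('s \<times> 'a) set))) Q2 s a\<bar> \<le> (G^^(card (UNIV :: ('s \<times> 'a) set))) (\<lambda>s a. \<bar>Q1 s a - Q2 s a\<bar>) s a" by (rule Bn_abs)
  also have "\<dots> \<le> (G^^(card (UNIV :: ('s \<times> 'a) set))) (\<lambda>s a. c) s a" by (rule Gn_mono) (rule assms)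
  also have "\<dots> = c * u (card (UNIV :: ('s \<times> 'a) set)) s a" using c by (rule Gn_const)
  also have "\<dots> \<le> c * beta" unfolding beta_def by (rule mult_left_mono[OF Mx_ge c])
  finally show ?thesis .
qed

lemma beta_fix: "0 \<le> c \<Longrightarrow> c \<le> c * beta \<Longrightarrow> c = 0"
proof -
  assume c: "0 \<le> c" "c \<le> c * beta"
  have "c * (1 - beta) \<le> 0" using c(2) by (simp add: algebra_simps)
  moreover have "0 \<le> c * (1 - beta)" using c(1) beta by simp
  ultimately have "c * (1 - beta) = 0" by linarith
  then show "c = 0" using beta by simp
qed

lemma compare:
  assumes Q: "\<And>s a. Q s a \<le> B Q s a" and V: "B V = V"
  shows "Q s a \<le> V s a"
proof -
  define D where "D s a = max (Q s a - V s a) 0" for s a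
  have Dnn: "\<And>s a. 0 \<le> D s a" unfolding D_def by simp
  have DG: "D s a \<le> G D s a" for s a
  proof -
    have "Q s a - V s a \<le> B Q s a - B V s a" using Q[of s a] V by simp
    also have "\<dots> \<le> G D s a" unfolding D_def by (rule B_diff)
    finally have "Q s a - V s a \<le> G D s a" .
    moreover have "0 \<le> G D s a" by (rule G_nn) (rule Dnn)
    ultimately show ?thesis unfolding D_def by simp
  qed
  have Dn: "D s a \<le> (G^^n) D s a" for n s a
  proof (induction n arbitrary: s a)
    case 0 then show ?case by simp
  next
    case (Suc n)
    have "D s a \<le> G D s a" by (rule DG)
    also have "\<dots> \<le> G ((G^^n) D) s a" by (rule G_mono) (rule Suc.IH)
    finally show ?case by simp
  qed
  define c where "c = Mx D"
  have c0: "0 \<le> c" unfolding c_def using Dnn Mx_ge by (metis order_trans)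
  have Db: "D s a \<le> c * beta" for s a
  proof -
    have "D s a \<le> (G^^(card (UNIV :: ('s \<times> 'a) set))) D s a" by (rule Dn)
    also have "\<dots> \<le> (G^^(card (UNIV :: ('s \<times> 'a) set))) (\<lambda>s a. c) s a"
      by (rule Gn_mono) (simp add: c_def Mx_ge)
    also have "\<dots> = c * u (card (UNIV :: ('s \<times> 'a) set)) s a" using c0 by (rule Gn_const)
    also have "\<dots> \<le> c * beta" unfolding beta_def by (rule mult_left_mono[OF Mx_ge c0])
    finally show ?thesis .
  qed
  obtain s1 a1 where "c = D s1 a1" unfolding c_def using Mx_ex by blast
  then have "c \<le> c * beta" using Db by simp
  then have "c = 0" using c0 beta_fix by blast
  then have "D s a \<le> 0" using Db[of s a] by simp
  then show ?thesis unfolding D_def by simp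
qed

lemma exists_fix: "\<exists>V. B V = V"
proof -
  define F where "F = B^^(card (UNIV :: ('s \<times> 'a) set))"
  have Fc: "\<bar>F X s a - F Y s a\<bar> \<le> c * beta" if "\<And>s a. \<bar>X s a - Y s a\<bar> \<le> c" for X Y c s a
    unfolding F_def by (rule Bn_contr) (rule that)
  define y where "y k = (F^^k) (\<lambda>s a. 0)" for k
  have yS: "y (Suc k) = F (y k)" for k by (simp add: y_def)
  define d where "d k = Mx (\<lambda>s a. \<bar>y (Suc k) s a - y k s a\<bar>)" for k
  have dS: "d (Suc k) \<le> beta * d k" for k
  proof -
    have "\<bar>y (Suc (Suc k)) s a - y (Suc k) s a\<bar> \<le> d k * beta" for s a
      unfolding yS[of "Suc k"] yS[of k] by (rule Fc) (use Mx_ge[of "\<lambda>s a. \<bar>F (y k) s a - y k s a\<bar>"] in \<open>simp add: d_def yS\<close>)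
    moreover obtain s1 a1 where "d (Suc k) = \<bar>y (Suc (Suc k)) s1 a1 - y (Suc k) s1 a1\<bar>"
      using Mx_ex[of "\<lambda>s a. \<bar>y (Suc (Suc k)) s a - y (Suc k) s a\<bar>"] unfolding d_def by blast
    ultimately show ?thesis by (simp add: mult.commute)
  qed
  have dk: "d k \<le> beta^k * d 0" for k
  proof (induction k)
    case 0 then show ?case by simp
  next
    case (Suc k)
    have "d (Suc k) \<le> beta * d k" by (rule dS)
    also have "\<dots> \<le> beta * (beta^k * d 0)" using Suc.IH beta by (intro mult_left_mono) auto
    finally show ?case by simp
  qed
  have diff: "\<bar>y (Suc k) s a - y k s a\<bar> \<le> d 0 * beta^k" for k s a
    using Mx_ge[of "\<lambda>s a. \<bar>y (Suc k) s a - y k s a\<bar>" s a] dk[of k] unfolding d_def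
    by (simp add: mult.commute)
  have conv: "\<exists>L. (\<lambda>k. y k s a) \<longlonglongrightarrow> L" for s a
  proof -
    have "summable (\<lambda>j. d 0 * beta^j)" using beta by (intro summable_mult summable_geometric) simp
    then have sm: "summable (\<lambda>j. y (Suc j) s a - y j s a)"
      by (rule summable_comparison_test') (simp add: diff)
    have "(\<lambda>k. y 0 s a + (\<Sum>j<k. y (Suc j) s a - y j s a)) \<longlonglongrightarrow> y 0 s a + suminf (\<lambda>j. y (Suc j) s a - y j s a)"
      by (intro tendsto_add tendsto_const summable_LIMSEQ sm)
    moreover have "y 0 s a + (\<Sum>j<k. y (Suc j) s a - y j s a) = y k s a" for k
      using sum_lessThan_telescope[of "\<lambda>j. y j s a" k] by simp
    ultimately show ?thesis by auto
  qed
  define L where "L s a = lim (\<lambda>k. y k s a)" for s a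
  have Ly: "(\<lambda>k. y k s a) \<longlonglongrightarrow> L s a" for s a
    using conv[of s a] unfolding L_def by (metis limI)
  have FL: "F L = L"
  proof (intro ext)
    fix s a
    define e where "e k = (\<Sum>p\<in>UNIV. \<bar>y k (fst p) (snd p) - L (fst p) (snd p)\<bar>)" for k
    have e0: "e \<longlonglongrightarrow> 0"
    proof -
      have "(\<lambda>k. \<Sum>p\<in>UNIV. \<bar>y k (fst p) (snd p) - L (fst p) (snd p)\<bar>) \<longlonglongrightarrow> (\<Sum>p\<in>(UNIV::('s\<times>'a) set). 0)"
      proof (rule tendsto_sum)
        fix p :: "'s \<times> 'a"
        have "(\<lambda>k. y k (fst p) (snd p) - L (fst p) (snd p)) \<longlonglongrightarrow> L (fst p) (snd p) - L (fst p) (snd p)"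
          by (intro tendsto_diff Ly tendsto_const)
        then show "(\<lambda>k. \<bar>y k (fst p) (snd p) - L (fst p) (snd p)\<bar>) \<longlonglongrightarrow> 0"
          by (intro tendsto_rabs_zero) simp
      qed
      then show ?thesis unfolding e_def by simp
    qed
    have eb: "\<bar>F (y k) s a - F L s a\<bar> \<le> e k * beta" for k
    proof (rule Fc)
      fix s' a'
      show "\<bar>y k s' a' - L s' a'\<bar> \<le> e k"
        unfolding e_def
        using member_le_sum[of "(s',a')" UNIV "\<lambda>p. \<bar>y k (fst p) (snd p) - L (fst p) (snd p)\<bar>"] by simp
    qed
    have eb0: "(\<lambda>k. e k * beta) \<longlonglongrightarrow> 0" using tendsto_mult[OF e0 tendsto_const[of beta]] by simp
    have "(\<lambda>k. F (y k) s a - F L s a) \<longlonglongrightarrow> 0"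
    proof (rule tendsto_sandwich[of "\<lambda>k. - (e k * beta)" _ _ "\<lambda>k. e k * beta"])
      show "\<forall>\<^sub>F k in sequentially. - (e k * beta) \<le> F (y k) s a - F L s a"
        using eb by (intro always_eventually allI) (metis abs_le_iff minus_le_iff)
      show "\<forall>\<^sub>F k in sequentially. F (y k) s a - F L s a \<le> e k * beta"
        using eb by (intro always_eventually allI) (metis abs_le_iff)
      show "(\<lambda>k. - (e k * beta)) \<longlonglongrightarrow> 0" using tendsto_minus[OF eb0] by simp
      show "(\<lambda>k. e k * beta) \<longlonglongrightarrow> 0" by (rule eb0)
    qed
    then have "(\<lambda>k. F (y k) s a) \<longlonglongrightarrow> F L s a" by (rule Lim_transform[OF tendsto_const])
    moreover have "(\<lambda>k. F (y k) s a) \<longlonglongrightarrow> L s a"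
      using LIMSEQ_Suc[OF Ly[of s a]] unfolding yS .
    ultimately show "F L s a = L s a" by (rule LIMSEQ_unique)
  qed
  have FBL: "F (B L) = B L" unfolding F_def using FL unfolding F_def by (metis funpow_swap1)
  define c where "c = Mx (\<lambda>s a. \<bar>B L s a - L s a\<bar>)"
  have c0: "0 \<le> c" unfolding c_def by (metis Mx_ge abs_ge_zero order_trans)
  have cb: "\<bar>B L s a - L s a\<bar> \<le> c * beta" for s a
  proof -
    have "\<bar>F (B L) s a - F L s a\<bar> \<le> c * beta" by (rule Fc) (use Mx_ge[of "\<lambda>s a. \<bar>B L s a - L s a\<bar>"] in \<open>simp add: c_def\<close>)
    then show ?thesis using FBL FL by simp
  qed
  obtain s1 a1 where "c = \<bar>B L s1 a1 - L s1 a1\<bar>" unfolding c_def using Mx_ex by blast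
  then have "c \<le> c * beta" using cb by simp
  then have "c = 0" using c0 beta_fix by blast
  then have "B L s a = L s a" for s a using cb[of s a] by simp
  then show ?thesis by blast
qed

lemma unique_fix: "\<exists>!V. B V = V"
proof -
  obtain V where V: "B V = V" using exists_fix by blast
  moreover have "W = V" if "B W = W" for W
    using compare[of W V] compare[of V W] V that by (intro ext antisym) auto
  ultimately show ?thesis by blast
qed

lemma Qstar_fix: "B (Qstar P R Sbot) = Qstar P R Sbot"
  unfolding Qstar_def using unique_fix by (rule theI')

end


theorem mainTheorem11:
  fixes P :: "'s::finite \<Rightarrow> 'a::finite \<Rightarrow> 's \<Rightarrow> real"
    and R :: "'s \<Rightarrow> real" and \<rho> :: "'s \<Rightarrow> real" and Sbot :: "'s set" and s0 :: 's
    and pol mu Qmax :: "'s \<Rightarrow> 'a \<Rightarrow> real" and s :: 's and a :: 'a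
  assumes elp: "finite_ELP P \<rho> Sbot s0"
    and pol: "is_policy pol"
    and feas: "\<forall>s a. Qmax s a \<le> bellman P R Sbot Qmax s a"
    and opt: "\<forall>Q. (\<forall>s a. Q s a \<le> bellman P R Sbot Q s a) \<longrightarrow>
                   exp_terminal_Q P Sbot s0 pol Q \<le> exp_terminal_Q P Sbot s0 pol Qmax"
    and mu: "is_policy mu" and greedy: "greedy Qmax mu"
    and eq: "Qmax s a = Qstar P R Sbot s a"
  shows "\<forall>s' a'. s' \<notin> Sbot \<and> P s a s' * mu s' a' > 0 \<longrightarrow>
           Qmax s' a' = Qstar P R Sbot s' a' \<and>
           Max (range (Qmax s')) = Max (range (Qstar P R Sbot s'))"
proof -
  have Pnn: "\<And>s a s'. 0 \<le> P s a s'" and Psum: "\<And>s a. (\<Sum>s'\<in>UNIV. P s a s') = 1"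
    using elp unfolding finite_ELP_def by auto
  interpret ctx P R Sbot
  proof
    show "\<And>s a s'. 0 \<le> P s a s'" by (rule Pnn)
    show "\<And>s a. (\<Sum>s'\<in>UNIV. P s a s') = 1" by (rule Psum)
    show "\<And>E. E \<noteq> {} \<Longrightarrow> \<not> (\<forall>(s,a)\<in>E. \<forall>s'. P s a s' > 0 \<longrightarrow> s' \<notin> Sbot \<and> (\<exists>a'. (s',a') \<in> E))"
      using no_trap[OF elp] by blast
  qed
  define qs where "qs = Qstar P R Sbot"
  have hfix: "bellman P R Sbot qs = qs" unfolding qs_def by (rule Qstar_fix)
  have le: "Qmax x b \<le> qs x b" for x b
    by (rule compare[OF _ hfix]) (use feas in blast)
  have muN: "\<And>s a. 0 \<le> mu s a" using mu unfolding is_policy_def by auto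
  show ?thesis unfolding qs_def[symmetric]
  proof (intro allI impI)
    fix s' a' assume h: "s' \<notin> Sbot \<and> P s a s' * mu s' a' > 0"
    have ps: "P s a s' > 0" and ms: "mu s' a' > 0"
      using h Pnn[of s a s'] muN[of s' a'] by (auto simp: zero_less_mult_iff)
    define t where "t x = P s a x * (if x \<notin> Sbot then Max (range (qs x)) - Max (range (Qmax x)) else 0)" for x
    have tnn: "\<forall>x\<in>UNIV. 0 \<le> t x"
    proof
      fix x
      have "Max (range (Qmax x)) \<le> Max (range (qs x))" by (rule Max_mono') (rule le)
      then show "0 \<le> t x" unfolding t_def using Pnn[of s a x] by simp
    qed
    have "sum t UNIV = bellman P R Sbot qs s a - bellman P R Sbot Qmax s a"
      unfolding t_def by (rule B_diff_eq[symmetric])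
    also have "\<dots> \<le> 0" using hfix feas eq unfolding qs_def[symmetric] by (metis diff_le_0_iff_le)
    finally have "sum t UNIV = 0" using sum_nonneg[of UNIV t] tnn by simp
    then have "t s' = 0" using sum_nonneg_eq_0_iff[of UNIV t] tnn by simp
    then have mx: "Max (range (Qmax s')) = Max (range (qs s'))" using ps h unfolding t_def by simp
    have g: "Qmax s' a' = Max (range (Qmax s'))" using greedy ms unfolding greedy_def by blast
    have "qs s' a' \<le> Max (range (qs s'))" by (rule Max_ge')
    then have "Qmax s' a' = qs s' a'" using g mx le[of s' a'] by linarith
    then show "Qmax s' a' = qs s' a' \<and> Max (range (Qmax s')) = Max (range (qs s'))" using mx by simp
  qed
qed

end
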